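(* Let $F:\mathbb R^m\to\mathbb R^r$, $C\in\mathbb R^{r\times n}$ with nonzero columns, $\Theta(x,y)=\frac12\|F(x)-Cy\|^2$, and fix $x$. Consider the double greedy procedure: set $\underline y^0=\mathbf 0$, $\overline y^0=\mathbf 1$; for $k=1,\dots,n$ let $a=\Theta(x,\underline y^{k-1}+\mathbf e_k)-\Theta(x,\underline y^{k-1})$ and $b=\Theta(x,\overline y^{k-1}-\mathbf e_k)-\Theta(x,\overline y^{k-1})$; if $a\ge b$ set $\underline y^k=\underline y^{k-1}+\mathbf e_k$, $\overline y^k=\overline y^{k-1}$, otherwise set $\underline y^k=\underline y^{k-1}$, $\overline y^k=\overline y^{k-1}-\mathbf e_k$; return $\hat y=\underline y^n=\overline y^n$. If $C$ is obtuse, then $\Theta(x,\hat y)\ge\frac13\max_{y\in\{0,1\}^n}\Theta(x,y)$. If $C$ has mutually orthogonal columns, then $\hat y$ is a maximizer of $\Theta(x,\cdot)$ over $\{0,1\}^n$.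
   Context: $C=(c_1,\dots,c_n)$ is obtuse if $c_i^\top c_j\le0$ for all $i\neq j$. $\mathbf e_k$ is the $k$-th standard unit vector, $\mathbf 0,\mathbf 1$ the all-zeros and all-ones vectors in $\mathbb R^n$. *)

theory Defs
  imports "HOL-Analysis.Analysis"
begin

(* Vectors y in R^n are represented as functions nat => real, only entries j < n matter.
   The matrix C in R^(r x n) is given by its columns C j :: real^'r for j < n. *)

definition matvec :: "nat \<Rightarrow> (nat \<Rightarrow> real^'r) \<Rightarrow> (nat \<Rightarrow> real) \<Rightarrow> real^'r" where
  "matvec n C y = (\<Sum>j<n. y j *\<^sub>R C j)"

definition Theta :: "('m \<Rightarrow> real^'r) \<Rightarrow> nat \<Rightarrow> (nat \<Rightarrow> real^'r) \<Rightarrow> 'm \<Rightarrow> (nat \<Rightarrow> real) \<Rightarrow> real" where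
  "Theta F n C x y = (1/2) * (norm (F x - matvec n C y))\<^sup>2"

(* e_k for the 1-based index k corresponds to the 0-based index k-1; step Suc k processes index k *)
fun double_greedy :: "('m \<Rightarrow> real^'r) \<Rightarrow> nat \<Rightarrow> (nat \<Rightarrow> real^'r) \<Rightarrow> 'm \<Rightarrow> nat
     \<Rightarrow> (nat \<Rightarrow> real) \<times> (nat \<Rightarrow> real)" where
  "double_greedy F n C x 0 = ((\<lambda>j. 0), (\<lambda>j. if j < n then 1 else 0))"
| "double_greedy F n C x (Suc k) =
     (let (lo, hi) = double_greedy F n C x k;
          a = Theta F n C x (lo(k := lo k + 1)) - Theta F n C x lo;
          b = Theta F n C x (hi(k := hi k - 1)) - Theta F n C x hi
      in if a \<ge> b then (lo(k := lo k + 1), hi) else (lo, hi(k := hi k - 1)))"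

definition dg_output :: "('m \<Rightarrow> real^'r) \<Rightarrow> nat \<Rightarrow> (nat \<Rightarrow> real^'r) \<Rightarrow> 'm \<Rightarrow> nat \<Rightarrow> real" where
  "dg_output F n C x = fst (double_greedy F n C x n)"

definition binvecs :: "nat \<Rightarrow> (nat \<Rightarrow> real) set" where
  "binvecs n = {y. (\<forall>j<n. y j = 0 \<or> y j = 1) \<and> (\<forall>j\<ge>n. y j = 0)}"

definition obtuse :: "nat \<Rightarrow> (nat \<Rightarrow> real^'r) \<Rightarrow> bool" where
  "obtuse n C \<longleftrightarrow> (\<forall>i<n. \<forall>j<n. i \<noteq> j \<longrightarrow> C i \<bullet> C j \<le> 0)"

definition orthogonal_cols :: "nat \<Rightarrow> (nat \<Rightarrow> real^'r) \<Rightarrow> bool" where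
  "orthogonal_cols n C \<longleftrightarrow> (\<forall>i<n. \<forall>j<n. i \<noteq> j \<longrightarrow> C i \<bullet> C j = 0)"

end

theory Submission
  imports Defs
begin

definition Dm :: "('m \<Rightarrow> real^'r) \<Rightarrow> nat \<Rightarrow> (nat \<Rightarrow> real^'r) \<Rightarrow> 'm \<Rightarrow> (nat \<Rightarrow> real) \<Rightarrow> nat \<Rightarrow> real" where
  "Dm F n C x y k = (1/2) * (norm (C k))\<^sup>2 - (F x - matvec n C y) \<bullet> C k"

lemma matvec_upd:
  assumes "k < n"
  shows "matvec n C (y(k:=v)) = matvec n C y + (v - y k) *\<^sub>R C k"
proof -
  have "matvec n C (y(k:=v)) - matvec n C y = (\<Sum>j<n. ((y(k:=v)) j - y j) *\<^sub>R C j)"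
    by (simp add: matvec_def sum_subtractf scaleR_diff_left)
  also have "\<dots> = (\<Sum>j<n. (if j = k then (v - y k) *\<^sub>R C k else 0))"
    by (rule sum.cong) auto
  also have "\<dots> = (v - y k) *\<^sub>R C k" using assms by simp
  finally show ?thesis by (simp add: algebra_simps)
qed

lemma Theta_upd:
  assumes "k < n"
  shows "Theta F n C x (y(k:=y k + 1)) = Theta F n C x y + Dm F n C x y k"
proof -
  have "matvec n C (y(k:=y k + 1)) = matvec n C y + C k" using matvec_upd[OF assms, where C=C and y=y and v="y k + 1"] by simp
  then show ?thesis
    unfolding Theta_def Dm_def
    by (simp add: power2_norm_eq_inner inner_diff_left inner_diff_right inner_add_left
        inner_add_right inner_commute algebra_simps)
qed

lemma Dm_diff:
  "Dm F n C x y k - Dm F n C x z k = (\<Sum>j<n. (y j - z j) * (C j \<bullet> C k))"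
  unfolding Dm_def matvec_def
  by (simp add: inner_diff_left inner_sum_left sum_subtractf algebra_simps)

lemma Dm_mono:
  assumes "obtuse n C" "k < n" "y k = z k" "\<forall>j<n. y j \<le> z j"
  shows "Dm F n C x z k \<le> Dm F n C x y k"
proof -
  have "0 \<le> (\<Sum>j<n. (y j - z j) * (C j \<bullet> C k))"
  proof (rule sum_nonneg)
    fix j assume "j \<in> {..<n}"
    then show "0 \<le> (y j - z j) * (C j \<bullet> C k)"
      using assms unfolding obtuse_def
      by (cases "j = k") (auto intro!: mult_nonpos_nonpos)
  qed
  then show ?thesis using Dm_diff[of F n C x y k z] by linarith
qed

lemma Dm_eq:
  assumes "orthogonal_cols n C" "k < n" "y k = z k"
  shows "Dm F n C x z k = Dm F n C x y k"
proof -
  have "(\<Sum>j<n. (y j - z j) * (C j \<bullet> C k)) = 0"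
    by (rule sum.neutral) (use assms in \<open>auto simp: orthogonal_cols_def\<close>)
  then show ?thesis using Dm_diff[of F n C x y k z] by linarith
qed

definition dg_inv :: "nat \<Rightarrow> nat \<Rightarrow> (nat \<Rightarrow> real) \<Rightarrow> (nat \<Rightarrow> real) \<Rightarrow> bool" where
  "dg_inv n i lo hi \<longleftrightarrow> (\<forall>j. (j < i \<longrightarrow> lo j = hi j \<and> (lo j = 0 \<or> lo j = 1))
     \<and> (i \<le> j \<and> j < n \<longrightarrow> lo j = 0 \<and> hi j = 1) \<and> (n \<le> j \<longrightarrow> lo j = 0 \<and> hi j = 0))"

lemma dg_Suc:
  "double_greedy F n C x (Suc k) =
     (let lo = fst (double_greedy F n C x k); hi = snd (double_greedy F n C x k);
          a = Theta F n C x (lo(k := lo k + 1)) - Theta F n C x lo;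
          b = Theta F n C x (hi(k := hi k - 1)) - Theta F n C x hi
      in if a \<ge> b then (lo(k := lo k + 1), hi) else (lo, hi(k := hi k - 1)))"
  by (simp add: Let_def case_prod_beta)

lemma dg_inv_holds:
  "i \<le> n \<Longrightarrow> dg_inv n i (fst (double_greedy F n C x i)) (snd (double_greedy F n C x i))"
proof (induction i)
  case 0
  then show ?case by (auto simp: dg_inv_def)
next
  case (Suc i)
  then have IH: "dg_inv n i (fst (double_greedy F n C x i)) (snd (double_greedy F n C x i))" by simp
  show ?case
    using IH Suc.prems unfolding dg_Suc Let_def dg_inv_def
    by (auto split: if_splits)
qed

definition Oi :: "nat \<Rightarrow> (nat \<Rightarrow> real) \<Rightarrow> (nat \<Rightarrow> real) \<Rightarrow> nat \<Rightarrow> real" where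
  "Oi i lo opt = (\<lambda>j. if j < i then lo j else opt j)"


lemma step_common:
  assumes i: "i < n" and inv: "dg_inv n i lo hi" and opt: "opt \<in> binvecs n"
  shows "Theta F n C x (hi(i:=hi i - 1)) - Theta F n C x hi = - Dm F n C x (hi(i:=0)) i"
    and "Theta F n C x (lo(i:=lo i + 1)) - Theta F n C x lo = Dm F n C x lo i"
    and "lo i = 0" "hi i = 1" "lo(i:=lo i + 1) = lo(i:=1)"
    and "\<forall>j<n. lo j \<le> (hi(i:=0)) j"
    and "\<forall>j<n. ((Oi i lo opt)(i:=0)) j \<le> (hi(i:=0)) j"
    and "\<forall>j<n. lo j \<le> ((Oi i lo opt)(i:=0)) j"
    and "Oi i lo opt i = opt i"
    and "opt i = 0 \<or> opt i = 1"
proof -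
  have li: "lo i = 0" and hii: "hi i = 1" using inv i by (auto simp: dg_inv_def)
  then show "lo i = 0" "hi i = 1" "lo(i:=lo i + 1) = lo(i:=1)" by auto
  have "hi(i:=hi i - 1) = hi(i:=0)" using hii by simp
  moreover have "(hi(i:=0))(i := (hi(i:=0)) i + 1) = hi" using hii by auto
  then have "Theta F n C x hi = Theta F n C x (hi(i:=0)) + Dm F n C x (hi(i:=0)) i"
    using Theta_upd[OF i, of F C x "hi(i:=0)"] by simp
  ultimately show "Theta F n C x (hi(i:=hi i - 1)) - Theta F n C x hi = - Dm F n C x (hi(i:=0)) i"
    by simp
  show "Theta F n C x (lo(i:=lo i + 1)) - Theta F n C x lo = Dm F n C x lo i"
    using Theta_upd[OF i, of F C x lo] by simp
  show "\<forall>j<n. lo j \<le> (hi(i:=0)) j"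
    using inv unfolding dg_inv_def by (metis fun_upd_apply le_less_linear order_refl zero_le_one)
  show "opt i = 0 \<or> opt i = 1" using opt i by (auto simp: binvecs_def)
  show "\<forall>j<n. ((Oi i lo opt)(i:=0)) j \<le> (hi(i:=0)) j"
  proof (intro allI impI)
    fix j assume "j < n"
    then show "((Oi i lo opt)(i:=0)) j \<le> (hi(i:=0)) j"
    proof -
      have ij: "(j < i \<longrightarrow> lo j = hi j \<and> (lo j = 0 \<or> lo j = 1))
        \<and> (i \<le> j \<and> j < n \<longrightarrow> lo j = 0 \<and> hi j = 1)" using inv unfolding dg_inv_def by blast
      have oj: "opt j = 0 \<or> opt j = 1" using opt \<open>j < n\<close> unfolding binvecs_def by blast
      show ?thesis using ij oj \<open>j < n\<close> unfolding Oi_def by (cases "j < i"; cases "j = i") auto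
    qed
  qed
  show "\<forall>j<n. lo j \<le> ((Oi i lo opt)(i:=0)) j"
  proof (intro allI impI)
    fix j assume "j < n"
    then show "lo j \<le> ((Oi i lo opt)(i:=0)) j"
    proof -
      have ij: "(j < i \<longrightarrow> lo j = hi j \<and> (lo j = 0 \<or> lo j = 1))
        \<and> (i \<le> j \<and> j < n \<longrightarrow> lo j = 0 \<and> hi j = 1)" using inv unfolding dg_inv_def by blast
      have oj: "opt j = 0 \<or> opt j = 1" using opt \<open>j < n\<close> unfolding binvecs_def by blast
      show ?thesis using ij oj \<open>j < n\<close> unfolding Oi_def by (cases "j < i"; cases "j = i") auto
    qed
  qed
  show "Oi i lo opt i = opt i" by (simp add: Oi_def)
qed

lemma Oi_Suc_add: "Oi (Suc i) (lo(i:=1)) opt = (Oi i lo opt)(i := 1)"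
  by (auto simp: Oi_def)

lemma Oi_Suc_same: "Oi (Suc i) lo opt = (Oi i lo opt)(i := lo i)"
  by (auto simp: Oi_def)

lemma step_obtuse:
  fixes F :: "'m \<Rightarrow> real^'r" and x :: 'm
  assumes ob: "obtuse n C" and i: "i < n" and inv: "dg_inv n i lo hi" and opt: "opt \<in> binvecs n"
  defines "a \<equiv> Theta F n C x (lo(i:=lo i + 1)) - Theta F n C x lo"
  defines "b \<equiv> Theta F n C x (hi(i:=hi i - 1)) - Theta F n C x hi"
  shows "a \<ge> b \<Longrightarrow> Theta F n C x (Oi i lo opt) - Theta F n C x (Oi (Suc i) (lo(i:=lo i+1)) opt) \<le> a"
    and "\<not> a \<ge> b \<Longrightarrow> Theta F n C x (Oi i lo opt) - Theta F n C x (Oi (Suc i) lo opt) \<le> b"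
proof -
  note c = step_common[OF i inv opt]
  let ?O = "Oi i lo opt"
  let ?h = "hi(i:=0)"
  have a: "a = Dm F n C x lo i" using c(2)[where F=F and C=C and x=x] a_def by simp
  have b: "b = - Dm F n C x ?h i" using c(1)[where F=F and C=C and x=x] b_def by simp
  have ab: "Dm F n C x ?h i \<le> Dm F n C x lo i"
    by (rule Dm_mono[OF ob i]) (use c in auto)
  {
    assume ge: "a \<ge> b"
    show "Theta F n C x ?O - Theta F n C x (Oi (Suc i) (lo(i:=lo i+1)) opt) \<le> a"
    proof (cases "opt i = 1")
      case True
      then have "Oi (Suc i) (lo(i:=lo i+1)) opt = ?O"
        using c(5) Oi_Suc_add[of i lo opt] c(9) by (metis fun_upd_triv)
      then show ?thesis using a b ab ge by simp
    next
      case False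
      then have o0: "?O i = 0" using c(9,10) by simp
      have e: "Oi (Suc i) (lo(i:=lo i+1)) opt = ?O(i := ?O i + 1)"
        using c(5) Oi_Suc_add[of i lo opt] o0 by simp
      have oo: "?O(i:=0) = ?O" using o0 by auto
      have "Dm F n C x ?h i \<le> Dm F n C x ?O i"
        by (rule Dm_mono[OF ob i]) (use c(7) o0 oo in auto)
      then show ?thesis unfolding e using Theta_upd[OF i, of F C x ?O] b ge by simp
    qed
  }
  {
    assume lt: "\<not> a \<ge> b"
    show "Theta F n C x ?O - Theta F n C x (Oi (Suc i) lo opt) \<le> b"
    proof (cases "opt i = 0")
      case True
      then have "Oi (Suc i) lo opt = ?O"
        using c(3) Oi_Suc_same[of i lo opt] c(9) by (metis fun_upd_triv)
      then show ?thesis using a b ab lt by simp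
    next
      case False
      then have o1: "?O i = 1" using c(9,10) by simp
      let ?P = "?O(i:=0)"
      have e: "Oi (Suc i) lo opt = ?P"
        using c(3) Oi_Suc_same[of i lo opt] by simp
      have e2: "?P(i := ?P i + 1) = ?O" using o1 by auto
      have "Dm F n C x ?P i \<le> Dm F n C x lo i"
        by (rule Dm_mono[OF ob i]) (use c in auto)
      then show ?thesis unfolding e using Theta_upd[OF i, of F C x ?P] e2 a lt by simp
    qed
  }
qed

lemma step_orth:
  fixes F :: "'m \<Rightarrow> real^'r" and x :: 'm
  assumes ob: "orthogonal_cols n C" and i: "i < n" and inv: "dg_inv n i lo hi" and opt: "opt \<in> binvecs n"
  defines "a \<equiv> Theta F n C x (lo(i:=lo i + 1)) - Theta F n C x lo"
  defines "b \<equiv> Theta F n C x (hi(i:=hi i - 1)) - Theta F n C x hi"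
  shows "a \<ge> b \<Longrightarrow> Theta F n C x (Oi i lo opt) \<le> Theta F n C x (Oi (Suc i) (lo(i:=lo i+1)) opt)"
    and "\<not> a \<ge> b \<Longrightarrow> Theta F n C x (Oi i lo opt) \<le> Theta F n C x (Oi (Suc i) lo opt)"
proof -
  note c = step_common[OF i inv opt]
  let ?O = "Oi i lo opt"
  let ?h = "hi(i:=0)"
  have a: "a = Dm F n C x lo i" using c(2)[where F=F and C=C and x=x] a_def by simp
  have b: "b = - Dm F n C x ?h i" using c(1)[where F=F and C=C and x=x] b_def by simp
  have ab: "Dm F n C x ?h i = Dm F n C x lo i"
    by (rule Dm_eq[OF ob i]) (use c in auto)
  {
    assume ge: "a \<ge> b"
    show "Theta F n C x ?O \<le> Theta F n C x (Oi (Suc i) (lo(i:=lo i+1)) opt)"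
    proof (cases "opt i = 1")
      case True
      then have "Oi (Suc i) (lo(i:=lo i+1)) opt = ?O"
        using c(5) Oi_Suc_add[of i lo opt] c(9) by (metis fun_upd_triv)
      then show ?thesis by simp
    next
      case False
      then have o0: "?O i = 0" using c(9,10) by simp
      have e: "Oi (Suc i) (lo(i:=lo i+1)) opt = ?O(i := ?O i + 1)"
        using c(5) Oi_Suc_add[of i lo opt] o0 by simp
      have "Dm F n C x ?O i = Dm F n C x lo i"
        by (rule Dm_eq[OF ob i]) (use c o0 in auto)
      then show ?thesis unfolding e using Theta_upd[OF i, of F C x ?O] a b ab ge by simp
    qed
  }
  {
    assume lt: "\<not> a \<ge> b"
    show "Theta F n C x ?O \<le> Theta F n C x (Oi (Suc i) lo opt)"
    proof (cases "opt i = 0")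
      case True
      then have "Oi (Suc i) lo opt = ?O"
        using c(3) Oi_Suc_same[of i lo opt] c(9) by (metis fun_upd_triv)
      then show ?thesis by simp
    next
      case False
      then have o1: "?O i = 1" using c(9,10) by simp
      let ?P = "?O(i:=0)"
      have e: "Oi (Suc i) lo opt = ?P"
        using c(3) Oi_Suc_same[of i lo opt] by simp
      have e2: "?P(i := ?P i + 1) = ?O" using o1 by auto
      have "Dm F n C x ?P i = Dm F n C x lo i"
        by (rule Dm_eq[OF ob i]) (use c in auto)
      then show ?thesis unfolding e using Theta_upd[OF i, of F C x ?P] e2 a b ab lt by simp
    qed
  }
qed


lemma Theta_nonneg: "0 \<le> Theta F n C x y"
  by (simp add: Theta_def)

lemma binvecs_finite: "finite (binvecs n)"
proof -
  have "binvecs n \<subseteq> {f. \<forall>j. (j \<in> {..<n} \<longrightarrow> f j \<in> {0,1}) \<and> (j \<notin> {..<n} \<longrightarrow> f j = 0)}"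
    by (auto simp: binvecs_def)
  moreover have "finite {f :: nat \<Rightarrow> real. \<forall>j. (j \<in> {..<n} \<longrightarrow> f j \<in> {0,1}) \<and> (j \<notin> {..<n} \<longrightarrow> f j = 0)}"
    by (rule finite_set_of_finite_funs) auto
  ultimately show ?thesis by (rule finite_subset)
qed

lemma zero_binvecs: "(\<lambda>j. 0) \<in> binvecs n"
  by (simp add: binvecs_def)

lemma telescope:
  fixes F :: "'m \<Rightarrow> real^'r" and x :: 'm and C :: "nat \<Rightarrow> real^'r"
  assumes opt: "opt \<in> binvecs n"
  defines "L \<equiv> \<lambda>i. fst (double_greedy F n C x i)"
  defines "H \<equiv> \<lambda>i. snd (double_greedy F n C x i)"
  shows "i \<le> n \<Longrightarrow> obtuse n C \<Longrightarrow> Theta F n C x opt - Theta F n C x (Oi i (L i) opt)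
           \<le> (Theta F n C x (L i) - Theta F n C x (L 0)) + (Theta F n C x (H i) - Theta F n C x (H 0))"
    and "i \<le> n \<Longrightarrow> orthogonal_cols n C \<Longrightarrow> Theta F n C x opt \<le> Theta F n C x (Oi i (L i) opt)"
proof -
  have O0: "Oi 0 lo opt = opt" for lo by (simp add: Oi_def)
  {
    assume ob: "obtuse n C"
    show "i \<le> n \<Longrightarrow> Theta F n C x opt - Theta F n C x (Oi i (L i) opt)
           \<le> (Theta F n C x (L i) - Theta F n C x (L 0)) + (Theta F n C x (H i) - Theta F n C x (H 0))"
    proof (induction i)
      case 0
      then show ?case by (simp add: O0)
    next
      case (Suc i)
      then have i: "i < n" by simp
      have inv: "dg_inv n i (L i) (H i)" using dg_inv_holds[of i n F C x] i unfolding L_def H_def by simp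
      have IH: "Theta F n C x opt - Theta F n C x (Oi i (L i) opt)
           \<le> (Theta F n C x (L i) - Theta F n C x (L 0)) + (Theta F n C x (H i) - Theta F n C x (H 0))"
        using Suc by simp
      note st = step_obtuse[OF ob i inv opt, where F=F and x=x]
      show ?case
      proof (cases "Theta F n C x ((H i)(i:=H i i - 1)) - Theta F n C x (H i)
                 \<le> Theta F n C x ((L i)(i:=L i i + 1)) - Theta F n C x (L i)")
        case True
        then have e: "L (Suc i) = (L i)(i:=L i i + 1)" "H (Suc i) = H i"
          unfolding L_def H_def dg_Suc Let_def by simp_all
        then show ?thesis using st(1)[OF True] IH unfolding e by linarith
      next
        case False
        then have e: "L (Suc i) = L i" "H (Suc i) = (H i)(i:=H i i - 1)"
          unfolding L_def H_def dg_Suc Let_def by simp_all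
        then show ?thesis using st(2)[OF False] IH unfolding e by linarith
      qed
    qed
  }
  {
    assume ob: "orthogonal_cols n C"
    show "i \<le> n \<Longrightarrow> Theta F n C x opt \<le> Theta F n C x (Oi i (L i) opt)"
    proof (induction i)
      case 0
      then show ?case by (simp add: O0)
    next
      case (Suc i)
      then have i: "i < n" by simp
      have inv: "dg_inv n i (L i) (H i)" using dg_inv_holds[of i n F C x] i unfolding L_def H_def by simp
      have IH: "Theta F n C x opt \<le> Theta F n C x (Oi i (L i) opt)"
        using Suc by simp
      note st = step_orth[OF ob i inv opt, where F=F and x=x]
      show ?case
      proof (cases "Theta F n C x ((H i)(i:=H i i - 1)) - Theta F n C x (H i)
                 \<le> Theta F n C x ((L i)(i:=L i i + 1)) - Theta F n C x (L i)")
        case True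
        then have e: "L (Suc i) = (L i)(i:=L i i + 1)"
          unfolding L_def H_def dg_Suc Let_def by simp_all
        then show ?thesis using st(1)[OF True] IH unfolding e by linarith
      next
        case False
        then have e: "L (Suc i) = L i"
          unfolding L_def H_def dg_Suc Let_def by simp_all
        then show ?thesis using st(2)[OF False] IH unfolding e by linarith
      qed
    qed
  }
qed

lemma final_facts:
  "Oi n (fst (double_greedy F n C x n)) opt = fst (double_greedy F n C x n)
   \<and> snd (double_greedy F n C x n) = fst (double_greedy F n C x n)
   \<and> fst (double_greedy F n C x n) \<in> binvecs n"
  if opt: "opt \<in> binvecs n"
proof -
  have inv: "dg_inv n n (fst (double_greedy F n C x n)) (snd (double_greedy F n C x n))"
    using dg_inv_holds[of n n F C x] by simp
  show ?thesis
    using inv opt unfolding dg_inv_def binvecs_def Oi_def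
    by (auto simp: fun_eq_iff not_less) (metis not_less)
qed

theorem mainTheorem9:
  fixes F :: "real^'m \<Rightarrow> real^'r" and C :: "nat \<Rightarrow> real^'r" and n :: nat and x :: "real^'m"
  assumes nonzero: "\<forall>j<n. C j \<noteq> 0"
  shows "(obtuse n C \<longrightarrow>
            Theta F n C x (dg_output F n C x) \<ge> (1/3) * Max (Theta F n C x ` binvecs n))
       \<and> (orthogonal_cols n C \<longrightarrow>
            dg_output F n C x \<in> binvecs n \<and>
            (\<forall>y\<in>binvecs n. Theta F n C x y \<le> Theta F n C x (dg_output F n C x)))"
proof (intro conjI impI ballI)
  have ff: "Oi n (dg_output F n C x) opt = dg_output F n C x
   \<and> snd (double_greedy F n C x n) = dg_output F n C x
   \<and> dg_output F n C x \<in> binvecs n" if "opt \<in> binvecs n" for opt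
    using final_facts[OF that, of F C x] unfolding dg_output_def by simp
  show "dg_output F n C x \<in> binvecs n" using ff[OF zero_binvecs] by simp
  {
    fix y assume y: "y \<in> binvecs n" and ob: "orthogonal_cols n C"
    show "Theta F n C x y \<le> Theta F n C x (dg_output F n C x)"
      using telescope(2)[OF y order_refl ob, where F=F and x=x] ff[OF y]
      unfolding dg_output_def by simp
  }
  assume ob: "obtuse n C"
  have "Theta F n C x y \<le> 3 * Theta F n C x (dg_output F n C x)" if y: "y \<in> binvecs n" for y
  proof -
    have "Theta F n C x y - Theta F n C x (dg_output F n C x)
          \<le> (Theta F n C x (dg_output F n C x) - Theta F n C x (fst (double_greedy F n C x 0)))
           + (Theta F n C x (dg_output F n C x) - Theta F n C x (snd (double_greedy F n C x 0)))"
      using telescope(1)[OF y order_refl ob, where F=F and x=x] ff[OF y]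
      unfolding dg_output_def by simp
    moreover have "0 \<le> Theta F n C x (fst (double_greedy F n C x 0))"
                  "0 \<le> Theta F n C x (snd (double_greedy F n C x 0))"
      by (rule Theta_nonneg)+
    ultimately show ?thesis by linarith
  qed
  then have "Max (Theta F n C x ` binvecs n) \<le> 3 * Theta F n C x (dg_output F n C x)"
    using binvecs_finite zero_binvecs by (subst Max_le_iff) auto
  then show "Theta F n C x (dg_output F n C x) \<ge> (1/3) * Max (Theta F n C x ` binvecs n)"
    by simp
qed

end
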